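(* For integers $n\ge1$ and $k>\ell\ge1$, $\mu^{\{0,1\}}_{k,\ell}(\mathbb{Z}/n\mathbb{Z})\le\left\lfloor\frac{n}{k+\ell}\right\rfloor$.
   Context: For subsets $X,Y$ of an abelian group, $X+Y=\{x+y: x\in X, y\in Y\}$, and for an integer $j\ge 1$, $jX=X+\dots+X$ ($j$ copies); $0X=\{0\}$. For $A,C\subseteq \mathbb{Z}/n\mathbb{Z}$ and an integer $j\ge 1$, define $j *_C A = jA+(j-1)C$. A set $A\subseteq\mathbb{Z}/n\mathbb{Z}$ is $C$-$(k,\ell)$-sum-free if $(k *_C A)\cap(\ell *_C A)=\emptyset$. $\mu^C_{k,\ell}(\mathbb{Z}/n\mathbb{Z})$ denotes the maximum size of a $C$-$(k,\ell)$-sum-free subset of $\mathbb{Z}/n\mathbb{Z}$. *)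

theory Defs
  imports Main
begin

text \<open>Z/nZ is modelled as the carrier {0..<n} of natural numbers with addition mod n.\<close>

definition zsum :: "nat \<Rightarrow> nat set \<Rightarrow> nat set \<Rightarrow> nat set" where
  "zsum n X Y = {(x + y) mod n | x y. x \<in> X \<and> y \<in> Y}"

fun zmult :: "nat \<Rightarrow> nat \<Rightarrow> nat set \<Rightarrow> nat set" where
  "zmult n 0 X = {0}"
| "zmult n (Suc j) X = zsum n X (zmult n j X)"

text \<open>j *_C A = jA + (j-1)C  (used for j \<ge> 1).\<close>
definition cstar :: "nat \<Rightarrow> nat \<Rightarrow> nat set \<Rightarrow> nat set \<Rightarrow> nat set" where
  "cstar n j C A = zsum n (zmult n j A) (zmult n (j - 1) C)"

definition C_sum_free :: "nat \<Rightarrow> nat set \<Rightarrow> nat \<Rightarrow> nat \<Rightarrow> nat set \<Rightarrow> bool" where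
  "C_sum_free n C k l A \<longleftrightarrow> A \<subseteq> {0..<n} \<and> cstar n k C A \<inter> cstar n l C A = {}"

definition mu :: "nat \<Rightarrow> nat set \<Rightarrow> nat \<Rightarrow> nat \<Rightarrow> nat" where
  "mu n C k l = Max (card ` {A. C_sum_free n C k l A})"

end

theory Submission
  imports Defs
begin

lemma zsum_mem: "x \<in> X \<Longrightarrow> y \<in> Y \<Longrightarrow> (x + y) mod n \<in> zsum n X Y"
  unfolding zsum_def by blast

lemma zsum_memE: "z \<in> zsum n X Y \<Longrightarrow> (\<And>x y. x \<in> X \<Longrightarrow> y \<in> Y \<Longrightarrow> z = (x + y) mod n \<Longrightarrow> P) \<Longrightarrow> P"
  unfolding zsum_def by blast

lemma zsum_sub: "0 < n \<Longrightarrow> zsum n X Y \<subseteq> {0..<n}"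
  unfolding zsum_def by auto

lemma zsum_comm: "zsum n X Y = zsum n Y X"
  unfolding zsum_def by (metis (no_types, lifting) add.commute)

lemma zsum_assoc: "zsum n (zsum n X Y) Z = zsum n X (zsum n Y Z)"
proof (intro equalityI subsetI)
  fix w assume "w \<in> zsum n (zsum n X Y) Z"
  then obtain u z where u: "u \<in> zsum n X Y" "z \<in> Z" "w = (u + z) mod n" by (blast elim: zsum_memE)
  then obtain x y where "x \<in> X" "y \<in> Y" "u = (x + y) mod n" by (blast elim: zsum_memE)
  then have "w = (x + (y + z) mod n) mod n" using u by (simp add: mod_add_left_eq mod_add_right_eq add.assoc)
  then show "w \<in> zsum n X (zsum n Y Z)" using \<open>x \<in> X\<close> \<open>y \<in> Y\<close> u(2) by (simp add: zsum_mem)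
next
  fix w assume "w \<in> zsum n X (zsum n Y Z)"
  then obtain x u where u: "x \<in> X" "u \<in> zsum n Y Z" "w = (x + u) mod n" by (blast elim: zsum_memE)
  then obtain y z where "y \<in> Y" "z \<in> Z" "u = (y + z) mod n" by (blast elim: zsum_memE)
  then have "w = ((x + y) mod n + z) mod n" using u by (simp add: mod_add_left_eq mod_add_right_eq add.assoc)
  then show "w \<in> zsum n (zsum n X Y) Z" using \<open>z \<in> Z\<close> \<open>y \<in> Y\<close> u(1) by (simp add: zsum_mem)
qed

lemma zsum_zero: "X \<subseteq> {0..<n} \<Longrightarrow> zsum n X {0} = X"
  unfolding zsum_def by force

lemma zsum_empty: "zsum n {} Y = {}"
  unfolding zsum_def by auto

lemma cstar_one: "X \<subseteq> {0..<n} \<Longrightarrow> cstar n 1 C X = X"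
  unfolding cstar_def by (simp add: zsum_zero zsum_comm[of n "{0}" X])

lemma cstar_Suc: "j \<ge> 1 \<Longrightarrow> cstar n (Suc j) C A = zsum n (zsum n (cstar n j C A) A) C"
proof -
  assume "j \<ge> 1"
  then obtain i where j: "j = Suc i" by (cases j) auto
  have "cstar n (Suc j) C A = zsum n (zsum n A (zmult n j A)) (zsum n C (zmult n i C))"
    by (simp add: cstar_def j)
  also have "\<dots> = zsum n (zsum n (zsum n (zmult n j A) (zmult n i C)) A) C"
    by (metis zsum_assoc zsum_comm)
  finally show ?thesis by (simp add: cstar_def j)
qed

lemma cstar_empty: "j \<ge> 1 \<Longrightarrow> cstar n j C {} = {}"
  by (cases j) (auto simp: cstar_def zsum_empty zsum_comm[of n "{}"])


lemma tr_inj: assumes "(b::nat) < n" "b' < n" "(b + e) mod n = (b' + e) mod n" shows "b = b'"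
proof -
  have "int ((b + e) mod n) = int ((b' + e) mod n)" using assms(3) by simp
  then have h: "(int b + int e) mod int n = (int b' + int e) mod int n" by (simp add: zmod_int)
  have "int b mod int n = ((int b + int e) mod int n - int e) mod int n" by (simp add: mod_diff_left_eq)
  also have "\<dots> = ((int b' + int e) mod int n - int e) mod int n" using h by simp
  also have "\<dots> = int b' mod int n" by (simp add: mod_diff_left_eq)
  finally show ?thesis using assms(1,2) by simp
qed

lemma tr_inj_on: fixes n e :: nat shows "inj_on (\<lambda>b. (b + e) mod n) {0..<n}"
proof (rule inj_onI)
  fix x y assume "x \<in> {0..<n}" "y \<in> {0..<n}" "(x + e) mod n = (y + e) mod n"
  then show "x = y" using tr_inj[of x n y e] by simp
qed

lemma tr_inj_on': fixes n e :: nat shows "inj_on (\<lambda>b. (e + b) mod n) {0..<n}"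
proof (rule inj_onI)
  fix x y assume "x \<in> {0..<n}" "y \<in> {0..<n}" "(e + x) mod n = (e + y) mod n"
  then show "x = y" using tr_inj[of x n y e] by (simp add: add.commute)
qed

lemma sub_eq: "(b::nat) < n \<Longrightarrow> (b + (x + (n - b)) mod n) mod n = x mod n"
  by (metis add.left_commute add_diff_inverse_nat mod_add_right_eq mod_add_self2 order_less_imp_not_less)

lemma zsum_mono: "X \<subseteq> X' \<Longrightarrow> Y \<subseteq> Y' \<Longrightarrow> zsum n X Y \<subseteq> zsum n X' Y'"
  unfolding zsum_def by blast

lemma closed_all:
  fixes n x0 :: nat
  assumes "x0 \<in> X" "\<forall>x\<in>X. (x + 1) mod n \<in> X" "x0 < n"
  shows "{0..<n} \<subseteq> X"
proof -
  have j: "(x0 + j) mod n \<in> X" for j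
  proof (induction j)
    case 0 then show ?case using assms by simp
  next
    case (Suc j)
    have "((x0 + j) mod n + 1) mod n \<in> X" using Suc assms(2) by blast
    moreover have "((x0 + j) mod n + 1) mod n = (x0 + Suc j) mod n"
      by (metis add_Suc_right mod_add_left_eq Suc_eq_plus1)
    ultimately show ?case by simp
  qed
  show ?thesis
  proof
    fix y assume "y \<in> {0..<n}"
    then have "y = (x0 + (y + n - x0)) mod n" using assms(3) by simp
    then show "y \<in> X" using j by metis
  qed
qed

lemma key:
  assumes n: "0 < n"
  shows "X \<subseteq> {0..<n} \<Longrightarrow> X \<noteq> {} \<Longrightarrow> B \<subseteq> {0..<n} \<Longrightarrow> B \<noteq> {} \<Longrightarrow>
     min n (card X + card B) \<le> card (zsum n (zsum n X B) {0, 1 mod n})"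
proof (induction "card B" arbitrary: B X rule: less_induct)
  case (less B X)
  define Z where "Z = zsum n (zsum n X B) {0, 1 mod n}"
  have finZ: "finite Z" unfolding Z_def using zsum_sub[OF n] finite_subset by blast
  have fX: "finite X" "finite B" using less.prems finite_subset by auto
  show ?case
  proof (cases "\<exists>e<n. (\<exists>b\<in>B. (b + e) mod n \<in> X) \<and> (\<exists>b\<in>B. (b + e) mod n \<notin> X)")
    case True
    then obtain e where e: "e < n" "\<exists>b\<in>B. (b + e) mod n \<in> X" "\<exists>b\<in>B. (b + e) mod n \<notin> X" by blast
    define B' where "B' = {b\<in>B. (b + e) mod n \<in> X}"
    define T where "T = (\<lambda>b. (b + e) mod n) ` B"
    define X' where "X' = X \<union> T"
    have B'B: "B' \<subset> B" using e(3) unfolding B'_def by blast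
    have B'ne: "B' \<noteq> {}" using e(2) unfolding B'_def by blast
    have B'sub: "B' \<subseteq> {0..<n}" using B'B less.prems by blast
    have Tsub: "T \<subseteq> {0..<n}" unfolding T_def using n by auto
    have X'sub: "X' \<subseteq> {0..<n}" unfolding X'_def using Tsub less.prems by blast
    have X'ne: "X' \<noteq> {}" unfolding X'_def using less.prems by blast
    have cardB': "card B' < card B" using B'B fX psubset_card_mono by blast
    have cT: "card T = card B" unfolding T_def
      using card_image inj_on_subset[OF tr_inj_on less.prems(3)] by blast
    have XT: "X \<inter> T = (\<lambda>b. (b + e) mod n) ` B'" unfolding T_def B'_def by blast
    have cXT: "card (X \<inter> T) = card B'" unfolding XT
      using card_image inj_on_subset[OF tr_inj_on B'sub] by blast
    have fT: "finite T" unfolding T_def using fX by simp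
    have "card X' + card (X \<inter> T) = card X + card T" unfolding X'_def
      using card_Un_Int[OF fX(1) fT] by simp
    then have sums: "card X' + card B' = card X + card B" using cT cXT by simp
    have sub: "zsum n X' B' \<subseteq> zsum n X B"
    proof
      fix w assume "w \<in> zsum n X' B'"
      then obtain x b where xb: "x \<in> X'" "b \<in> B'" "w = (x + b) mod n" by (blast elim: zsum_memE)
      show "w \<in> zsum n X B"
      proof (cases "x \<in> X")
        case True then show ?thesis using xb B'B by (auto intro: zsum_mem)
      next
        case False
        then obtain c where c: "c \<in> B" "x = (c + e) mod n" using xb(1) unfolding X'_def T_def by blast
        have be: "(b + e) mod n \<in> X" using xb(2) unfolding B'_def by blast
        have "w = ((b + e) mod n + c) mod n" using xb(3) c(2)
          by (simp add: mod_add_left_eq mod_add_right_eq ac_simps)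
        then show ?thesis using be c(1) by (simp add: zsum_mem)
      qed
    qed
    have "min n (card X' + card B') \<le> card (zsum n (zsum n X' B') {0, 1 mod n})"
      using less.hyps[OF cardB' X'sub X'ne B'sub B'ne] .
    also have "\<dots> \<le> card Z" unfolding Z_def
      by (rule card_mono[OF finZ[unfolded Z_def]]) (rule zsum_mono[OF sub], simp)
    finally show ?thesis using sums Z_def by simp
  next
    case False
    then have stab0: "\<And>e b b'. e < n \<Longrightarrow> b \<in> B \<Longrightarrow> b' \<in> B \<Longrightarrow> (b + e) mod n \<in> X \<Longrightarrow> (b' + e) mod n \<in> X"
      by blast
    have stab: "(x + b' + (n - b)) mod n \<in> X" if "x \<in> X" "b \<in> B" "b' \<in> B" for x b b'
    proof -
      define e where "e = (x + (n - b)) mod n"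
      have "e < n" unfolding e_def using n by simp
      have bn: "b < n" using that less.prems by auto
      have xn: "x < n" using that less.prems by auto
      have "(b + e) mod n = x" unfolding e_def using sub_eq[OF bn, of x] xn by simp
      then have "(b' + e) mod n \<in> X" using stab0[OF \<open>e < n\<close> that(2,3)] that(1) by simp
      then show ?thesis unfolding e_def by (simp add: mod_add_right_eq ac_simps)
    qed
    obtain b0 where b0: "b0 \<in> B" using less.prems by blast
    define P1 where "P1 = (\<lambda>x. (x + b0) mod n) ` X"
    have P1Z: "P1 \<subseteq> Z"
    proof
      fix w assume "w \<in> P1"
      then obtain x where x: "x \<in> X" "w = (x + b0) mod n" unfolding P1_def by blast
      have "(x + b0) mod n \<in> zsum n X B" using x b0 by (simp add: zsum_mem)
      then have "((x + b0) mod n + 0) mod n \<in> Z" unfolding Z_def by (rule zsum_mem) simp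
      then show "w \<in> Z" using x by simp
    qed
    have cP1: "card P1 = card X" unfolding P1_def
      using card_image inj_on_subset[OF tr_inj_on less.prems(1)] by blast
    show ?thesis
    proof (cases "\<forall>x\<in>X. (x + 1) mod n \<in> X")
      case True
      obtain x0 where "x0 \<in> X" using less.prems by blast
      moreover have "x0 < n" using \<open>x0 \<in> X\<close> less.prems by auto
      ultimately have "X = {0..<n}" using closed_all[OF _ True] less.prems by blast
      then have "card X = n" by simp
      then show ?thesis using card_mono[OF finZ P1Z] cP1 Z_def by simp
    next
      case False
      then obtain x1 where x1: "x1 \<in> X" "(x1 + 1) mod n \<notin> X" by blast
      define P2 where "P2 = (\<lambda>b. (x1 + 1 + b) mod n) ` B"
      have P2Z: "P2 \<subseteq> Z"
      proof
        fix w assume "w \<in> P2"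
        then obtain b where b: "b \<in> B" "w = (x1 + 1 + b) mod n" unfolding P2_def by blast
        have "(x1 + b) mod n \<in> zsum n X B" using x1 b by (simp add: zsum_mem)
        then have "((x1 + b) mod n + 1 mod n) mod n \<in> Z" unfolding Z_def by (rule zsum_mem) simp
        moreover have "((x1 + b) mod n + 1 mod n) mod n = (x1 + 1 + b) mod n"
          unfolding mod_add_eq by (simp add: ac_simps)
        ultimately show "w \<in> Z" using b by simp
      qed
      have cP2: "card P2 = card B" unfolding P2_def
        using card_image inj_on_subset[OF tr_inj_on' less.prems(3)] by blast
      have disj: "P1 \<inter> P2 = {}"
      proof (rule ccontr)
        assume "P1 \<inter> P2 \<noteq> {}"
        then obtain x b where xb: "x \<in> X" "b \<in> B" "(x + b0) mod n = (x1 + 1 + b) mod n"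
          unfolding P1_def P2_def by blast
        have bn: "b < n" using xb less.prems by auto
        have "(x + b0 + (n - b)) mod n \<in> X" using stab[OF xb(1) xb(2) b0] .
        moreover have "(x + b0 + (n - b)) mod n = ((x + b0) mod n + (n - b)) mod n"
          by (simp add: mod_add_left_eq)
        moreover have "\<dots> = ((x1 + 1 + b) mod n + (n - b)) mod n" using xb(3) by simp
        moreover have "\<dots> = (x1 + 1 + b + (n - b)) mod n" by (simp add: mod_add_left_eq)
        moreover have "x1 + 1 + b + (n - b) = (x1 + 1) + n" using bn by simp
        moreover have "((x1 + 1) + n) mod n = (x1 + 1) mod n" by (rule mod_add_self2)
        ultimately have "(x1 + 1) mod n \<in> X" by metis
        then show False using x1 by simp
      qed
      have fP: "finite P1" "finite P2" unfolding P1_def P2_def using fX by auto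
      have "card (P1 \<union> P2) = card X + card B" using card_Un_disjoint[OF fP disj] cP1 cP2 by simp
      moreover have "card (P1 \<union> P2) \<le> card Z" using card_mono[OF finZ] P1Z P2Z by blast
      ultimately show ?thesis using Z_def by simp
    qed
  qed
qed


lemma zsum_ne: "X \<noteq> {} \<Longrightarrow> Y \<noteq> {} \<Longrightarrow> zsum n X Y \<noteq> {}"
  unfolding zsum_def by blast

lemma min_step: "min (n::nat) (j * a) \<le> s \<Longrightarrow> min n (Suc j * a) \<le> min n (s + a)"
  by (auto simp: min_def split: if_splits)

lemma two_min: "min (n::nat) a \<le> x \<Longrightarrow> min n b \<le> y \<Longrightarrow> 0 < x \<Longrightarrow> 0 < y \<Longrightarrow> x + y \<le> n \<Longrightarrow> a \<le> x \<and> b \<le> y"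
  by (auto simp: min_def split: if_splits)

lemma growth:
  assumes n: "0 < n" and A: "A \<subseteq> {0..<n}" "A \<noteq> {}"
  shows "j \<ge> 1 \<Longrightarrow> min n (j * card A) \<le> card (cstar n j {0, 1 mod n} A) \<and>
     cstar n j {0, 1 mod n} A \<subseteq> {0..<n} \<and> cstar n j {0, 1 mod n} A \<noteq> {}"
proof (induction j)
  case 0 then show ?case by simp
next
  case (Suc j)
  show ?case
  proof (cases "j = 0")
    case True then show ?thesis using A cstar_one[OF A(1)] by simp
  next
    case False
    then have j1: "j \<ge> 1" by simp
    note IH = Suc.IH[OF j1]
    let ?S = "cstar n j {0, 1 mod n} A"
    have eq: "cstar n (Suc j) {0, 1 mod n} A = zsum n (zsum n ?S A) {0, 1 mod n}"
      using cstar_Suc[OF j1] .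
    have k: "min n (card ?S + card A) \<le> card (cstar n (Suc j) {0, 1 mod n} A)"
      unfolding eq using key[OF n, of ?S A] IH A by blast
    have "min n (Suc j * card A) \<le> min n (card ?S + card A)" using IH by (intro min_step) blast
    then have "min n (Suc j * card A) \<le> card (cstar n (Suc j) {0, 1 mod n} A)" using k by linarith
    moreover have "cstar n (Suc j) {0, 1 mod n} A \<subseteq> {0..<n}" unfolding eq using zsum_sub[OF n] .
    moreover have "cstar n (Suc j) {0, 1 mod n} A \<noteq> {}" unfolding eq using IH A by (simp add: zsum_ne)
    ultimately show ?thesis by blast
  qed
qed

theorem theorem3p2:
  fixes n k l :: nat
  assumes "n \<ge> 1" and "k > l" and "l \<ge> 1"
  shows "mu n {0, 1 mod n} k l \<le> n div (k + l)"
proof -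
  have n: "0 < n" using assms by simp
  let ?C = "{0, 1 mod n}"
  let ?F = "{A. C_sum_free n ?C k l A}"
  have fin: "finite ?F" by (rule finite_subset[of _ "Pow {0..<n}"]) (auto simp: C_sum_free_def)
  have ne: "{} \<in> ?F" using assms by (simp add: C_sum_free_def cstar_empty)
  have bound: "card A \<le> n div (k + l)" if "A \<in> ?F" for A
  proof (cases "A = {}")
    case True then show ?thesis by simp
  next
    case False
    have A: "A \<subseteq> {0..<n}" and dis: "cstar n k ?C A \<inter> cstar n l ?C A = {}"
      using that by (auto simp: C_sum_free_def)
    have gk: "min n (k * card A) \<le> card (cstar n k ?C A)" "cstar n k ?C A \<subseteq> {0..<n}" "cstar n k ?C A \<noteq> {}"
      using growth[OF n A False, of k] assms by auto
    have gl: "min n (l * card A) \<le> card (cstar n l ?C A)" "cstar n l ?C A \<subseteq> {0..<n}" "cstar n l ?C A \<noteq> {}"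
      using growth[OF n A False, of l] assms by auto
    have fk: "finite (cstar n k ?C A)" "finite (cstar n l ?C A)"
      using finite_subset[OF gk(2) finite_atLeastLessThan] finite_subset[OF gl(2) finite_atLeastLessThan] by blast+
    have "card (cstar n k ?C A) + card (cstar n l ?C A) = card (cstar n k ?C A \<union> cstar n l ?C A)"
      using card_Un_disjoint[OF fk dis] by simp
    also have "\<dots> \<le> n" using card_mono[of "{0..<n}"] gk(2) gl(2) by auto
    finally have s: "card (cstar n k ?C A) + card (cstar n l ?C A) \<le> n" .
    have "card (cstar n k ?C A) > 0" "card (cstar n l ?C A) > 0" using card_gt_0_iff fk gk(3) gl(3) by blast+
    then have "k * card A \<le> card (cstar n k ?C A) \<and> l * card A \<le> card (cstar n l ?C A)"
      using two_min[OF gk(1) gl(1) _ _ s] by blast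
    then have "card A * (k + l) \<le> n" using s by (simp add: algebra_simps)
    then show ?thesis using assms by (simp add: less_eq_div_iff_mult_less_eq)
  qed
  show ?thesis unfolding mu_def
    using fin ne bound by (subst Max_le_iff) auto
qed

end
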